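(* For every $n\ge 4$, $|\mathrm{Sort}_n(123,321)|=7\cdot 2^{n-4}$.
   Context: A permutation $x$ contains a pattern $p$ if it has a subsequence order-isomorphic to $p$; otherwise it avoids $p$. For a set $T$ of patterns, the map $s_T$ is defined as follows: the entries of the input permutation $x=x_1\cdots x_n$ are read from left to right, with an initially empty stack. At each step, if the input is nonempty and pushing the next input entry onto the stack produces a stack whose contents, read from top to bottom, avoid every pattern in $T$, that entry is pushed; otherwise the top entry of the stack is popped and appended to the output. When the input is exhausted, the remaining stack entries are popped one at a time to the output. $s_T(x)$ is the output word. Write $s_{\sigma,\tau}=s_{\{\sigma,\tau\}}$ and $s=s_{\{21\}}$ (West's stack-sorting map, whose stack is increasing from top to bottom). $\mathrm{Sort}_n(\sigma,\tau)$ is the set of $x\in S_n$ such that $s(s_{\sigma,\tau}(x))=12\cdots n$. *)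

theory Defs
  imports Main
begin

definition perms :: "nat \<Rightarrow> nat list set" where
  "perms n = {xs. distinct xs \<and> set xs = {1..n}}"

definition order_iso :: "nat list \<Rightarrow> nat list \<Rightarrow> bool" where
  "order_iso ys p \<longleftrightarrow> length ys = length p \<and>
     (\<forall>i<length p. \<forall>j<length p. (ys ! i < ys ! j \<longleftrightarrow> p ! i < p ! j))"

definition contains :: "nat list \<Rightarrow> nat list \<Rightarrow> bool" where
  "contains xs p \<longleftrightarrow> (\<exists>I. order_iso (nths xs I) p)"

definition avoids_all :: "nat list set \<Rightarrow> nat list \<Rightarrow> bool" where
  "avoids_all T w \<longleftrightarrow> (\<forall>p\<in>T. \<not> contains w p)"

(* Arguments: input, stack (top first), output.
   If the stack is empty, pushing is always performed (this case never arises
   for patterns of length >= 2, since a one-entry stack avoids them). *)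
fun stack_run :: "nat list set \<Rightarrow> nat list \<Rightarrow> nat list \<Rightarrow> nat list \<Rightarrow> nat list" where
  "stack_run T [] [] out = out"
| "stack_run T [] (s # st) out = stack_run T [] st (out @ [s])"
| "stack_run T (a # inp) [] out = stack_run T inp [a] out"
| "stack_run T (a # inp) (s # st) out =
     (if avoids_all T (a # s # st) then stack_run T inp (a # s # st) out
      else stack_run T (a # inp) st (out @ [s]))"

definition sT :: "nat list set \<Rightarrow> nat list \<Rightarrow> nat list" where
  "sT T x = stack_run T x [] []"

definition west_s :: "nat list \<Rightarrow> nat list" where
  "west_s x = sT {[2,1]} x"

definition Sort :: "nat \<Rightarrow> nat list \<Rightarrow> nat list \<Rightarrow> nat list set" where
  "Sort n \<sigma> \<tau> = {x \<in> perms n. west_s (sT {\<sigma>, \<tau>} x) = [1..<n+1]}"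

end

theory Submission
  imports Defs "HOL-Library.Sublist" "HOL-Library.Multiset"
begin

abbreviation T0 :: "nat list set" where "T0 \<equiv> {[1,2,3],[3,2,1]}"

lemma contains_subseq: "contains w p \<longleftrightarrow> (\<exists>s. subseq s w \<and> order_iso s p)"
  unfolding contains_def subseq_conv_nths by blast

lemma len3E: assumes "length s = 3" obtains a b c where "s = [a,b,c]"
  using assms by (auto simp: numeral_3_eq_3 length_Suc_conv)

lemma oi123: "order_iso s [1,2,3] \<longleftrightarrow> (\<exists>a b c. s = [a,b,c] \<and> a < b \<and> b < c)"
proof
  assume "order_iso s [1,2,3]"
  then have l: "length s = 3" and h: "\<forall>i<3. \<forall>j<3. (s ! i < s ! j \<longleftrightarrow> [1::nat,2,3] ! i < [1,2,3] ! j)"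
    unfolding order_iso_def by auto
  from l obtain a b c where s: "s = [a,b,c]" by (rule len3E)
  from h have "s!0 < s!1" "s!1 < s!2" by auto
  with s show "\<exists>a b c. s = [a,b,c] \<and> a < b \<and> b < c" by auto
next
  assume "\<exists>a b c. s = [a,b,c] \<and> a < b \<and> b < c"
  then obtain a b c where "s = [a,b,c]" "a<b" "b<c" by auto
  then show "order_iso s [1,2,3]" unfolding order_iso_def
    by (auto simp: less_Suc_eq numeral_3_eq_3 nth_Cons')
qed

lemma oi321: "order_iso s [3,2,1] \<longleftrightarrow> (\<exists>a b c. s = [a,b,c] \<and> a > b \<and> b > c)"
proof
  assume "order_iso s [3,2,1]"
  then have l: "length s = 3" and h: "\<forall>i<3. \<forall>j<3. (s ! i < s ! j \<longleftrightarrow> [3::nat,2,1] ! i < [3,2,1] ! j)"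
    unfolding order_iso_def by auto
  from l obtain a b c where s: "s = [a,b,c]" by (rule len3E)
  from h have "s!1 < s!0" "s!2 < s!1" by auto
  with s show "\<exists>a b c. s = [a,b,c] \<and> a > b \<and> b > c" by auto
next
  assume "\<exists>a b c. s = [a,b,c] \<and> a > b \<and> b > c"
  then obtain a b c where "s = [a,b,c]" "a>b" "b>c" by auto
  then show "order_iso s [3,2,1]" unfolding order_iso_def
    by (auto simp: less_Suc_eq numeral_3_eq_3 nth_Cons')
qed

lemma oi21: "order_iso s [2,1] \<longleftrightarrow> (\<exists>a b. s = [a,b] \<and> a > b)"
proof
  assume "order_iso s [2,1]"
  then have l: "length s = 2" and h: "\<forall>i<2. \<forall>j<2. (s ! i < s ! j \<longleftrightarrow> [2::nat,1] ! i < [2,1] ! j)"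
    unfolding order_iso_def by auto
  from l obtain a b where s: "s = [a,b]" by (auto simp: numeral_2_eq_2 length_Suc_conv)
  from h have "s!1 < s!0" by auto
  with s show "\<exists>a b. s = [a,b] \<and> a > b" by auto
next
  assume "\<exists>a b. s = [a,b] \<and> a > b"
  then obtain a b where "s = [a,b]" "a>b" by auto
  then show "order_iso s [2,1]" unfolding order_iso_def
    by (auto simp: less_Suc_eq numeral_2_eq_2 nth_Cons')
qed

fun i2 :: "nat \<Rightarrow> nat list \<Rightarrow> bool" where
  "i2 x [] = False"
| "i2 x (y#ys) = ((x < y \<and> (\<exists>c\<in>set ys. y < c)) \<or> i2 x ys)"
fun i3 :: "nat list \<Rightarrow> bool" where
  "i3 [] = False"
| "i3 (x#xs) = (i2 x xs \<or> i3 xs)"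
fun d2 :: "nat \<Rightarrow> nat list \<Rightarrow> bool" where
  "d2 x [] = False"
| "d2 x (y#ys) = ((x > y \<and> (\<exists>c\<in>set ys. y > c)) \<or> d2 x ys)"
fun d3 :: "nat list \<Rightarrow> bool" where
  "d3 [] = False"
| "d3 (x#xs) = (d2 x xs \<or> d3 xs)"

lemma sub2_Cons: "subseq [b,c] (y#ys) \<longleftrightarrow> (b = y \<and> c \<in> set ys) \<or> subseq [b,c] ys"
  by (auto simp: subseq_singleton_left dest: subseq_Cons')

lemma i2_iff: "i2 x ys \<longleftrightarrow> (\<exists>b c. subseq [b,c] ys \<and> x < b \<and> b < c)"
proof (induction ys)
  case (Cons a ys)
  have "(\<exists>b c. subseq [b,c] (a#ys) \<and> x<b \<and> b<c) \<longleftrightarrow> (x<a \<and> (\<exists>c\<in>set ys. a<c)) \<or> (\<exists>b c. subseq [b,c] ys \<and> x<b \<and> b<c)"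
    unfolding sub2_Cons by blast
  then show ?case using Cons.IH by simp
qed simp

lemma d2_iff: "d2 x ys \<longleftrightarrow> (\<exists>b c. subseq [b,c] ys \<and> x > b \<and> b > c)"
proof (induction ys)
  case (Cons a ys)
  have "(\<exists>b c. subseq [b,c] (a#ys) \<and> x>b \<and> b>c) \<longleftrightarrow> (x>a \<and> (\<exists>c\<in>set ys. a>c)) \<or> (\<exists>b c. subseq [b,c] ys \<and> x>b \<and> b>c)"
    unfolding sub2_Cons by blast
  then show ?case using Cons.IH by simp
qed simp

lemma sub3_Cons: "subseq [a,b,c] (y#ys) \<longleftrightarrow> (a = y \<and> subseq [b,c] ys) \<or> subseq [a,b,c] ys"
  by (cases "a = y") (auto dest: subseq_Cons')

lemma i3_iff: "i3 w \<longleftrightarrow> (\<exists>a b c. subseq [a,b,c] w \<and> a < b \<and> b < c)"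
proof (induction w)
  case (Cons x xs)
  have "(\<exists>a b c. subseq [a,b,c] (x#xs) \<and> a < b \<and> b < c) \<longleftrightarrow>
    (\<exists>b c. subseq [b,c] xs \<and> x < b \<and> b < c) \<or> (\<exists>a b c. subseq [a,b,c] xs \<and> a < b \<and> b < c)"
    unfolding sub3_Cons by blast
  then show ?case using Cons.IH by (simp add: i2_iff)
qed simp

lemma d3_iff: "d3 w \<longleftrightarrow> (\<exists>a b c. subseq [a,b,c] w \<and> a > b \<and> b > c)"
proof (induction w)
  case (Cons x xs)
  have "(\<exists>a b c. subseq [a,b,c] (x#xs) \<and> a > b \<and> b > c) \<longleftrightarrow>
    (\<exists>b c. subseq [b,c] xs \<and> x > b \<and> b > c) \<or> (\<exists>a b c. subseq [a,b,c] xs \<and> a > b \<and> b > c)"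
    unfolding sub3_Cons by blast
  then show ?case using Cons.IH by (simp add: d2_iff)
qed simp

lemma av: "avoids_all T0 w \<longleftrightarrow> \<not> i3 w \<and> \<not> d3 w"
proof -
  have "contains w [1,2,3] \<longleftrightarrow> i3 w" unfolding contains_subseq oi123 i3_iff by blast
  moreover have "contains w [3,2,1] \<longleftrightarrow> d3 w" unfolding contains_subseq oi321 d3_iff by blast
  ultimately show ?thesis unfolding avoids_all_def by simp
qed

lemma avW: "avoids_all {[2,1]} w \<longleftrightarrow> sorted w"
proof -
  have "contains w [2,1] \<longleftrightarrow> (\<exists>a b. subseq [a,b] w \<and> a > b)"
    unfolding contains_subseq oi21 by blast
  then have "avoids_all {[2,1]} w \<longleftrightarrow> \<not>(\<exists>a b. subseq [a,b] w \<and> a > b)"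
    unfolding avoids_all_def by simp
  also have "\<dots> \<longleftrightarrow> sorted w"
  proof (induction w)
    case (Cons a w)
    have "(\<exists>b c. subseq [b,c] (a#w) \<and> b>c) \<longleftrightarrow> (\<exists>c\<in>set w. a>c) \<or> (\<exists>b c. subseq [b,c] w \<and> b>c)"
      unfolding sub2_Cons by blast
    then show ?case using Cons.IH by (auto simp: not_less)
  qed simp
  finally show ?thesis .
qed

lemma run_app: "stack_run T inp st (xs @ ys) = xs @ stack_run T inp st ys"
  by (induction T inp st ys arbitrary: xs rule: stack_run.induct) (simp_all)

lemma run_out: "stack_run T inp st out = out @ stack_run T inp st []"
  using run_app[of T inp st out "[]"] by simp

lemma run_end: "stack_run T [] st out = out @ st"
  by (induction st arbitrary: out) simp_all

lemma run_mset: "mset (stack_run T inp st out) = mset out + mset st + mset inp"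
  by (induction T inp st out rule: stack_run.induct) (auto simp: ac_simps)

lemma run_set: "set (stack_run T inp st out) = set out \<union> set st \<union> set inp"
  by (metis run_mset set_mset_mset set_mset_union)

lemma run_stack_subseq:
  fixes out :: "nat list"
  shows "subseq st (stack_run T inp st [])"
proof (induction T inp st out rule: stack_run.induct)
  case (2 T s st out)
  then show ?case by (simp add: run_out[of T "[]" st "[s]"])
next
  case (4 T a inp s st out)
  show ?case
  proof (cases "avoids_all T (a # s # st)")
    case True
    with 4 show ?thesis by (simp add: subseq_Cons')
  next
    case False
    with 4 show ?thesis by (simp add: run_out[of T "a#inp" st "[s]"])
  qed
qed simp_all

lemma av_suc: "avoids_all {[Suc 0,2,3],[3,2,Suc 0]} w \<longleftrightarrow> \<not> i3 w \<and> \<not> d3 w"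
  using av[of w] by simp

lemma avW_suc[simp]: "avoids_all {[2, Suc 0]} w \<longleftrightarrow> sorted w"
  using avW[of w] by simp

lemma av2[simp]: "avoids_all {[Suc 0,2,3],[3,2,Suc 0]} [a,b]" by (simp add: av_suc)

lemma sub2I: "subseq [x,y] (us @ x # vs @ y # ws)"
  by (rule list_emb_append2) (simp add: subseq_singleton_left)

lemma sub2I': "x \<in> set xs \<Longrightarrow> y \<in> set ys \<Longrightarrow> subseq [x,y] (xs @ ys)"
  by (metis in_set_conv_decomp sub2I append_assoc append_Cons)

lemma run_bot:
  assumes "T = T0" "B \<noteq> []" "\<forall>a\<in>set inp. avoids_all T0 (a # B)" "st = S @ B"
  shows "\<exists>ys. stack_run T inp st out = ys @ B"
  using assms
proof (induction T inp st out arbitrary: S rule: stack_run.induct)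
  case (2 T s st out)
  show ?case
  proof (cases S)
    case Nil
    with 2 show ?thesis by (auto simp: run_end)
  next
    case (Cons s' S')
    with 2 show ?thesis by auto
  qed
next
  case (4 T a inp s st out)
  show ?case
  proof (cases "avoids_all T (a # s # st)")
    case True
    then have "stack_run T (a#inp) (s#st) out = stack_run T inp (a#s#st) out" by simp
    moreover have "\<exists>ys. stack_run T inp (a#s#st) out = ys @ B"
      using 4(1)[of "a#S"] 4(3-) True by auto
    ultimately show ?thesis by metis
  next
    case False
    show ?thesis
    proof (cases S)
      case Nil
      with 4 False show ?thesis by auto
    next
      case (Cons s' S')
      with 4(2)[of S'] 4(3-) False show ?thesis by auto
    qed
  qed
qed auto

lemma run_last:
  assumes "st \<noteq> []"
  shows "\<exists>ys. stack_run T0 inp st out = ys @ [last st]"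
proof -
  obtain S where "st = S @ [last st]" using assms by (metis append_butlast_last_id)
  then show ?thesis using run_bot[of T0 "[last st]" inp st S out] by auto
qed

lemma SL:
  assumes "stack_run T0 inp st out = F"
    and "st = S @ e # B"
    and "\<forall>a\<in>set inp. avoids_all T0 (a # B)"
    and "\<forall>a\<in>set inp. \<forall>e'\<in>insert e (set inp). e' \<le> e \<longrightarrow> a \<noteq> e' \<longrightarrow> (avoids_all T0 (a # e' # B) \<longleftrightarrow> e' < a)"
    and "distinct (inp @ st)"
    and "e \<le> lim" "lim < g" "g \<in> set inp \<union> set S"
  shows "\<exists>w. w \<le> lim \<and> subseq [g, w] F"
  using assms
proof (induction "2 * length inp + length st" arbitrary: inp st out S e rule: less_induct)
  case less
  show ?case
  proof (cases inp)
    case Nil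
    with less.prems have "F = out @ S @ e # B" by (simp add: run_end)
    moreover from less.prems Nil have "g \<in> set S" by simp
    ultimately have "subseq [g, e] F"
      using sub2I'[of g "out @ S" e "e # B"] by simp
    then show ?thesis using less.prems by blast
  next
    case (Cons a inp')
    show ?thesis
    proof (cases S)
      case (Cons s S')
      show ?thesis
      proof (cases "avoids_all T0 (a # st)")
        case True
        then have F: "stack_run T0 inp' (a # st) out = F"
          using less.prems `inp = a # inp'` Cons by simp
        show ?thesis
          apply (rule less.hyps[OF _ F, of "a # S" e])
          using less.prems `inp = a # inp'` Cons by auto
      next
        case False
        then have F: "stack_run T0 (a # inp') (S' @ e # B) (out @ [s]) = F"
          using less.prems `inp = a # inp'` Cons by simp
        show ?thesis
        proof (cases "g = s")
          case True
          have "e \<in> set (stack_run T0 (a # inp') (S' @ e # B) [])" by (simp add: run_set)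
          then have "subseq [s, e] ([s] @ stack_run T0 (a # inp') (S' @ e # B) [])"
            by (simp add: subseq_singleton_left)
          then have "subseq [s, e] F" using F run_out[of T0 "a # inp'" "S' @ e # B" "out @ [s]"]
            by (metis append_assoc list_emb_append2)
          then show ?thesis using True less.prems by blast
        next
          case False
          show ?thesis
            apply (rule less.hyps[OF _ F, of S' e])
            using less.prems `inp = a # inp'` Cons False by auto
        qed
      qed
    next
      case Nil
      note SNil = Nil
      show ?thesis
      proof (cases "avoids_all T0 (a # st)")
        case True
        then have F: "stack_run T0 inp' (a # st) out = F"
          using less.prems `inp = a # inp'` Nil by simp
        show ?thesis
          apply (rule less.hyps[OF _ F, of "[a]" e])
          using less.prems `inp = a # inp'` Nil by auto
      next
        case False
        have ane: "a \<noteq> e" using less.prems `inp = a # inp'` Nil by auto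
        have nav: "\<not> avoids_all T0 (a # e # B)" using False less.prems(2) Nil by simp
        have "a < e" using less.prems(4) nav ane `inp = a # inp'` by auto
        have F1: "stack_run T0 (a # inp') B (out @ [e]) = F"
          using less.prems False `inp = a # inp'` Nil by simp
        have "stack_run T0 (a # inp') B (out @ [e]) = stack_run T0 inp' (a # B) (out @ [e])"
        proof (cases B)
          case Nil then show ?thesis by simp
        next
          case (Cons b B')
          then show ?thesis using less.prems(3) `inp = a # inp'` by simp
        qed
        with F1 have F: "stack_run T0 inp' ([] @ a # B) (out @ [e]) = F" by simp
        show ?thesis
          apply (rule less.hyps[OF _ F, of "[]" a])
          using less.prems `inp = a # inp'` Nil `a < e` by auto
      qed
    qed
  qed
qed

lemma L3a:
  assumes "stack_run T inp st out = F" "T = T0" "st = S @ [b]" "n \<in> set inp"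
    "\<forall>x\<in>set inp \<union> set st. x \<le> n" "distinct (inp @ st)" "b < n"
    "u \<in> set S \<union> set (takeWhile (\<lambda>x. x \<noteq> n) inp)" "b < u"
  shows "subseq [u, n] F"
  using assms
proof (induction T inp st out arbitrary: S rule: stack_run.induct)
  case (4 T a inp s st out)
  show ?case
  proof (cases "avoids_all T (a # s # st)")
    case True
    show ?thesis
    proof (cases "a = n")
      case True
      then have "u \<in> set S" using 4 by simp
      then have "subseq [u, b] (s # st)" using 4(5) sub2I'[of u S b "[b]"] by simp
      then have "subseq [n, u, b] (n # s # st)" by simp
      moreover have "u < n"
      proof -
        have us: "u \<in> set (s # st)" using `u \<in> set S` 4(5) by simp
        have "a \<notin> set (s # st)" using 4(8) by simp
        then have "u \<noteq> n" using us True by auto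
        moreover have "u \<le> n" using 4(7) us by auto
        ultimately show ?thesis by simp
      qed
      ultimately have "d3 (n # s # st)" unfolding d3_iff using 4 by blast
      then show ?thesis using `avoids_all T (a # s # st)` True 4(4) by (simp add: av_suc)
    next
      case False
      have F: "stack_run T inp (a # s # st) out = F" using 4(3) `avoids_all T (a # s # st)` by simp
      show ?thesis
        apply (rule 4(1)[OF `avoids_all T (a # s # st)` F, of "a # S"])
        using 4(4-) False by auto
    qed
  next
    case False
    have F: "stack_run T (a # inp) st (out @ [s]) = F" using 4(3) False by simp
    show ?thesis
    proof (cases S)
      case Nil
      then show ?thesis using 4 False by simp
    next
      case (Cons s' S')
      then have ss: "s' = s" "st = S' @ [b]" using 4 by auto
      show ?thesis
      proof (cases "u = s")
        case True
        have "n \<in> set (stack_run T (a # inp) st [])" using 4(6) by (auto simp: run_set)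
        then have "subseq [u, n] (out @ [s] @ stack_run T (a # inp) st [])"
          using sub2I'[of u "out @ [s]" n] True by simp
        then show ?thesis using F run_out[of T "a # inp" st "out @ [s]"] by simp
      next
        case False
        show ?thesis
          apply (rule 4(2)[OF `\<not> avoids_all T (a # s # st)` F, of S'])
          using 4(4-) False ss Cons by auto
      qed
    qed
  qed
qed auto

definition no231 :: "nat list \<Rightarrow> bool" where
  "no231 F \<longleftrightarrow> (\<forall>a b c. subseq [a,b,c] F \<longrightarrow> \<not> (c < a \<and> a < b))"

lemma no231_app: "no231 (xs @ F) \<Longrightarrow> no231 F"
  unfolding no231_def by (meson list_emb_append2)

lemma no231_Cons: "no231 (x # F) \<Longrightarrow> no231 F"
  using no231_app[of "[x]" F] by simp

lemma no231_D: "no231 F \<Longrightarrow> subseq [a,b,c] F \<Longrightarrow> c < a \<Longrightarrow> a < b \<Longrightarrow> False"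
  unfolding no231_def by blast

inductive isD :: "nat list \<Rightarrow> bool" where
  D0: "isD []"
| D1: "isD z \<Longrightarrow> \<forall>x\<in>set z. x < m \<Longrightarrow> isD (m # z)"
| D2: "isD (a # z) \<Longrightarrow> \<forall>x\<in>set (a # z). x < m \<Longrightarrow> isD (a # m # z)"

definition M2base :: "nat list \<Rightarrow> nat set \<Rightarrow> bool" where
  "M2base B V \<longleftrightarrow> B \<noteq> [] \<and> distinct B \<and> set B \<inter> V = {} \<and>
     (\<forall>a\<in>V. avoids_all T0 (a # B)) \<and>
     (\<forall>a\<in>V. \<forall>e\<in>V. a \<noteq> e \<longrightarrow> (avoids_all T0 (a # e # B) \<longleftrightarrow> e < a)) \<and>
     (\<forall>a\<in>V. \<forall>c\<in>V. \<forall>d\<in>V. distinct [a,c,d] \<longrightarrow> d < c \<longrightarrow> \<not> avoids_all T0 (a # c # d # B))"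

lemma M2base_single: "M2base [N] {x. x < N}"
  unfolding M2base_def by (auto simp: av_suc)

lemma M2base_double: "N' < N \<Longrightarrow> M2base [N, N'] {x. x < N'}"
  unfolding M2base_def by (auto simp: av_suc)

lemma dec1:
  assumes "M2base B V" "m \<in> V" "set w \<subseteq> V" "\<forall>x\<in>set w. x < m"
  shows "stack_run T0 (m # w) B out = stack_run T0 w B (out @ [m])"
proof -
  obtain b B' where B: "B = b # B'" using assms(1) unfolding M2base_def by (cases B) auto
  have "stack_run T0 (m # w) B out = stack_run T0 w (m # B) out"
    using assms(1,2) B unfolding M2base_def by simp
  also have "\<dots> = stack_run T0 w B (out @ [m])"
  proof (cases w)
    case Nil then show ?thesis by (simp add: run_end)
  next
    case (Cons a w')
    have "\<not> avoids_all T0 (a # m # B)" using assms Cons unfolding M2base_def by auto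
    then show ?thesis using Cons B by simp
  qed
  finally show ?thesis .
qed

lemma dec2:
  assumes "M2base B V" "m \<in> V" "a \<in> V" "set w \<subseteq> V" "\<forall>x\<in>set (a # w). x < m" "distinct (a # w)"
  shows "stack_run T0 (a # m # w) B out = stack_run T0 (a # w) B (out @ [m])"
proof -
  obtain b B' where B: "B = b # B'" using assms(1) unfolding M2base_def by (cases B) auto
  have P1: "avoids_all T0 (a # B)" using assms unfolding M2base_def by auto
  have P2: "avoids_all T0 (m # a # B)" using assms unfolding M2base_def by auto
  have "stack_run T0 (a # m # w) B out = stack_run T0 (m # w) (a # B) out"
    using P1 B by simp
  also have "\<dots> = stack_run T0 w (m # a # B) out" using P2 B by simp
  also have "\<dots> = stack_run T0 w (a # B) (out @ [m])"
  proof (cases w)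
    case Nil then show ?thesis by (simp add: run_end)
  next
    case (Cons c w')
    have cV: "c \<in> V" using assms(4) Cons by auto
    have dc: "distinct [c, m, a]" using assms(5,6) Cons by auto
    have am: "a < m" using assms(5) by simp
    have "\<not> avoids_all T0 (c # m # a # B)" using assms(1) cV assms(2,3) dc am unfolding M2base_def by blast
    then show ?thesis using Cons B by simp
  qed
  also have "\<dots> = stack_run T0 (a # w) B (out @ [m])" using P1 B by simp
  finally show ?thesis .
qed

lemma sort_snoc_max:
  assumes "\<forall>x\<in>set z. x < m" "mset xs = mset (m # z)"
  shows "sort xs = sort z @ [m]"
proof (rule properties_for_sort)
  show "mset (sort z @ [m]) = mset xs" using assms(2) by simp
  show "sorted (sort z @ [m])" using assms(1) by (auto simp: sorted_append less_imp_le)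
qed

lemma isD_distinct: "isD z \<Longrightarrow> distinct z"
  by (induction rule: isD.induct) auto

lemma M2suff:
  assumes "isD z" "M2base B V" "set z \<subseteq> V"
  shows "stack_run T0 z B out = out @ rev (sort z) @ B"
  using assms
proof (induction arbitrary: out rule: isD.induct)
  case D0
  then show ?case by (simp add: run_end)
next
  case (D1 z m)
  have "stack_run T0 (m # z) B out = stack_run T0 z B (out @ [m])"
    using dec1[OF D1.prems(1)] D1.prems D1.hyps by auto
  also have "\<dots> = out @ [m] @ rev (sort z) @ B" using D1 by simp
  also have "sort (m # z) = sort z @ [m]" by (rule sort_snoc_max[OF D1.hyps(2)]) simp
  ultimately show ?case by simp
next
  case (D2 a z m)
  have "distinct (a # z)" using isD_distinct[OF D2.hyps(1)] .
  then have "stack_run T0 (a # m # z) B out = stack_run T0 (a # z) B (out @ [m])"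
    using dec2[OF D2.prems(1)] D2.prems D2.hyps by auto
  also have "\<dots> = out @ [m] @ rev (sort (a # z)) @ B" using D2 by simp
  also have "sort (a # m # z) = sort (a # z) @ [m]" by (rule sort_snoc_max[OF D2.hyps(2)]) simp
  ultimately show ?case by simp
qed

lemma M2nec:
  assumes "M2base B V" "set z \<subseteq> V" "distinct z" "no231 (stack_run T0 z B [])"
  shows "isD z"
  using assms
proof (induction "length z" arbitrary: z rule: less_induct)
  case less
  show ?case
  proof (cases z)
    case Nil
    then show ?thesis by (simp add: isD.D0)
  next
    case (Cons z1 z')
    define m where "m = Max (set z)"
    have mz: "m \<in> set z" using Cons m_def Max_in[of "set z"] by auto
    have mlt: "\<forall>x\<in>set z. x \<noteq> m \<longrightarrow> x < m" using m_def Cons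
      by (metis List.finite_set Max_ge le_neq_implies_less)
    obtain b B' where B: "B = b # B'" using less.prems(1) unfolding M2base_def by (cases B) auto
    have P1: "\<And>a. a \<in> V \<Longrightarrow> avoids_all T0 (a # B)" using less.prems(1) unfolding M2base_def by auto
    have P2: "\<And>a e. a \<in> V \<Longrightarrow> e \<in> V \<Longrightarrow> a \<noteq> e \<Longrightarrow> avoids_all T0 (a # e # B) \<longleftrightarrow> e < a"
      using less.prems(1) unfolding M2base_def by auto
    have P3: "\<And>a c d. a \<in> V \<Longrightarrow> c \<in> V \<Longrightarrow> d \<in> V \<Longrightarrow> distinct [a,c,d] \<Longrightarrow> d < c \<Longrightarrow> \<not> avoids_all T0 (a # c # d # B)"
      using less.prems(1) unfolding M2base_def by blast
    have BV: "set B \<inter> V = {}" "distinct B" using less.prems(1) unfolding M2base_def by auto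
    show ?thesis
    proof (cases "z1 = m")
      case True
      have "\<forall>x\<in>set z'. x < m" using mlt Cons less.prems(3) True by auto
      then have "stack_run T0 z B [] = stack_run T0 z' B [m]"
        using dec1[OF less.prems(1), of m z' "[]"] Cons True less.prems(2) by auto
      also have "\<dots> = m # stack_run T0 z' B []" using run_out[of T0 z' B "[m]"] by simp
      finally have "no231 (stack_run T0 z' B [])" using less.prems(4) no231_Cons by metis
      then have "isD z'" using less.hyps[of z'] Cons less.prems by auto
      then show ?thesis using Cons True `\<forall>x\<in>set z'. x < m` by (simp add: isD.D1)
    next
      case False
      then obtain z2 w where z': "z' = z2 # w" using Cons mz by (cases z') auto
      show ?thesis
      proof (cases "z2 = m")
        case True
        have lt: "\<forall>x\<in>set (z1 # w). x < m" using mlt Cons z' less.prems(3) True by auto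
        have "stack_run T0 z B [] = stack_run T0 (z1 # w) B [m]"
          using dec2[OF less.prems(1), of m z1 w "[]"] Cons z' True less.prems(2,3) lt by auto
        also have "\<dots> = m # stack_run T0 (z1 # w) B []" using run_out[of T0 "z1 # w" B "[m]"] by simp
        finally have "no231 (stack_run T0 (z1 # w) B [])" using less.prems(4) no231_Cons by metis
        then have "isD (z1 # w)" using less.hyps[of "z1 # w"] Cons z' less.prems by auto
        then show ?thesis using Cons z' True lt by (simp add: isD.D2)
      next
        case False
        have mw: "m \<in> set w" using mz Cons z' False `z1 \<noteq> m` by auto
        have V: "z1 \<in> V" "z2 \<in> V" "set w \<subseteq> V" using less.prems(2) Cons z' by auto
        have dz: "z1 \<noteq> z2" "z1 \<notin> set w" "z2 \<notin> set w" "distinct w" using less.prems(3) Cons z' by auto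
        have lt12: "z1 < m" "z2 < m" using mlt Cons z' False `z1 \<noteq> m` by auto
        have HB: "\<forall>a\<in>set w. avoids_all T0 (a # B)" using P1 V by auto
        have HB2: "\<And>e. e \<in> V \<Longrightarrow> \<forall>a\<in>set w. \<forall>e'\<in>insert e (set w). e' \<le> e \<longrightarrow> a \<noteq> e' \<longrightarrow> (avoids_all T0 (a # e' # B) \<longleftrightarrow> e' < a)"
          using P2 V by auto
        show ?thesis
        proof (cases "z2 < z1")
          case True
          have "stack_run T0 z B [] = stack_run T0 w (z2 # B) [z1]"
            using Cons z' P1[OF V(1)] P2[OF V(2) V(1) dz(1)[symmetric]] P1[OF V(2)] True B by simp
          then have F: "stack_run T0 w ([] @ z2 # B) [z1] = stack_run T0 z B []" by simp
          have dd: "distinct (w @ [] @ z2 # B)" using dz BV V by auto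
          obtain w0 where w0: "w0 \<le> z2" "subseq [m, w0] (stack_run T0 z B [])"
            using SL[OF F _ HB HB2[OF V(2)] dd, where lim = z2 and g = m] mw lt12 by auto
          have "stack_run T0 z B [] = z1 # stack_run T0 w (z2 # B) []"
            using `stack_run T0 z B [] = stack_run T0 w (z2 # B) [z1]` run_out[of T0 w "z2 # B" "[z1]"] by simp
          then have sub: "subseq [z1, m, w0] (stack_run T0 z B [])" using w0(2) lt12 by auto
          have False using no231_D[OF less.prems(4) sub] w0(1) True lt12 by linarith
          then show ?thesis ..
        next
          case False
          then have lt21: "z1 < z2" using dz(1) by auto
          obtain c w' where w: "w = c # w'" using mw by (cases w) auto
          have cV: "c \<in> V" using V w by auto
          have dc: "distinct [c, z2, z1]" using dz w by auto
          have "stack_run T0 z B [] = stack_run T0 w (z1 # B) [z2]"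
            using Cons z' P1[OF V(1)] P2[OF V(2) V(1) dz(1)[symmetric]] lt21 B
              P3[OF cV V(2) V(1) dc lt21] w by simp
          then have F: "stack_run T0 w ([] @ z1 # B) [z2] = stack_run T0 z B []" by simp
          have dd: "distinct (w @ [] @ z1 # B)" using dz BV V by auto
          obtain w0 where w0: "w0 \<le> z1" "subseq [m, w0] (stack_run T0 z B [])"
            using SL[OF F _ HB HB2[OF V(1)] dd, where lim = z1 and g = m] mw lt12 by auto
          have "stack_run T0 z B [] = z2 # stack_run T0 w (z1 # B) []"
            using `stack_run T0 z B [] = stack_run T0 w (z1 # B) [z2]` run_out[of T0 w "z1 # B" "[z2]"] by simp
          then have sub: "subseq [z2, m, w0] (stack_run T0 z B [])" using w0(2) lt12 by auto
          have False using no231_D[OF less.prems(4) sub] w0(1) lt21 lt12 by linarith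
          then show ?thesis ..
        qed
      qed
    qed
  qed
qed

abbreviation W0 :: "nat list set" where "W0 \<equiv> {[2,1]}"

lemma W231:
  assumes "stack_run T inp st out = F" "T = W0" "sorted_wrt (<) F"
  shows "no231 inp \<and> (\<forall>s\<in>set st. \<not> (\<exists>c a. subseq [c,a] inp \<and> a < s \<and> s < c))"
  using assms
proof (induction T inp st out rule: stack_run.induct)
  case (1 T out)
  then show ?case by (simp add: no231_def)
next
  case (2 T s st out)
  then show ?case by (simp add: no231_def)
next
  case (3 T a inp out)
  have F: "stack_run T inp [a] out = F" using 3(2) by simp
  have IH: "no231 inp \<and> \<not> (\<exists>c a'. subseq [c,a'] inp \<and> a' < a \<and> a < c)"
    using 3(1)[OF F 3(3) 3(4)] by simp
  show ?case unfolding no231_def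
  proof (intro conjI allI impI)
    fix x y z assume "subseq [x,y,z] (a # inp)"
    then have "(x = a \<and> subseq [y,z] inp) \<or> subseq [x,y,z] inp" using sub3_Cons[of x y z a inp] by blast
    then show "\<not> (z < x \<and> x < y)"
    proof
      assume h: "x = a \<and> subseq [y,z] inp"
      show ?thesis
      proof
        assume "z < x \<and> x < y"
        then have "subseq [y,z] inp \<and> z < a \<and> a < y" using h by simp
        then show False using IH by blast
      qed
    next
      assume h: "subseq [x,y,z] inp"
      show ?thesis using no231_D[OF conjunct1[OF IH] h] by blast
    qed
  qed simp
next
  case (4 T a inp s st out)
  show ?case
  proof (cases "avoids_all T (a # s # st)")
    case True
    then have srt: "sorted (a # s # st)" using 4(4) by simp
    have F: "stack_run T inp (a # s # st) out = F" using 4(3) True by simp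
    have IH: "no231 inp \<and> (\<forall>t\<in>set (a # s # st). \<not> (\<exists>c a'. subseq [c,a'] inp \<and> a' < t \<and> t < c))"
      by (rule 4(1)[OF True F 4(4) 4(5)])
    show ?thesis
    proof (intro conjI)
      show "no231 (a # inp)" unfolding no231_def
      proof (intro allI impI)
        fix x y z assume "subseq [x,y,z] (a # inp)"
        then have "(x = a \<and> subseq [y,z] inp) \<or> subseq [x,y,z] inp" using sub3_Cons[of x y z a inp] by blast
        then show "\<not> (z < x \<and> x < y)"
        proof
          assume h: "x = a \<and> subseq [y,z] inp"
          show ?thesis
          proof
            assume "z < x \<and> x < y"
            then have "subseq [y,z] inp \<and> z < a \<and> a < y" using h by simp
            moreover have "\<not> (\<exists>c a'. subseq [c,a'] inp \<and> a' < a \<and> a < c)" using IH by simp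
            ultimately show False by blast
          qed
        next
          assume h: "subseq [x,y,z] inp"
          show ?thesis using no231_D[OF conjunct1[OF IH] h] by blast
        qed
      qed
      show "\<forall>t\<in>set (s # st). \<not> (\<exists>c a'. subseq [c,a'] (a # inp) \<and> a' < t \<and> t < c)"
      proof (intro ballI notI)
        fix t assume t: "t \<in> set (s # st)" and "\<exists>c a'. subseq [c,a'] (a # inp) \<and> a' < t \<and> t < c"
        then obtain c a' where ca: "subseq [c,a'] (a # inp)" "a' < t" "t < c" by blast
        have "a \<le> t" using srt t by auto
        from ca(1) have "(c = a \<and> a' \<in> set inp) \<or> subseq [c,a'] inp" using sub2_Cons[of c a' a inp] by blast
        then show False
        proof
          assume "c = a \<and> a' \<in> set inp"
          then show False using ca `a \<le> t` by simp
        next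
          assume h: "subseq [c,a'] inp"
          have "t \<in> set (a # s # st)" using t by simp
          then have "\<not> (\<exists>c a'. subseq [c,a'] inp \<and> a' < t \<and> t < c)" using IH by blast
          then show False using h ca by blast
        qed
      qed
    qed
  next
    case False
    have F: "stack_run T (a # inp) st (out @ [s]) = F" using 4(3) False by simp
    have IH: "no231 (a # inp) \<and> (\<forall>t\<in>set st. \<not> (\<exists>c a'. subseq [c,a'] (a # inp) \<and> a' < t \<and> t < c))"
      by (rule 4(2)[OF False F 4(4) 4(5)])
    have "\<not> (\<exists>c a'. subseq [c,a'] (a # inp) \<and> a' < s \<and> s < c)"
    proof
      assume "\<exists>c a'. subseq [c,a'] (a # inp) \<and> a' < s \<and> s < c"
      then obtain c a' where ca: "subseq [c,a'] (a # inp)" "a' < s" by blast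
      have "a' \<in> set (a # inp)" using subseq_Cons'[OF ca(1)] by (simp only: subseq_singleton_left)
      then have "a' \<in> set (stack_run T (a # inp) st [])" by (auto simp: run_set)
      moreover have "F = (out @ [s]) @ stack_run T (a # inp) st []"
        using F run_out[of T "a # inp" st "out @ [s]"] by simp
      then have "sorted_wrt (<) ((out @ [s]) @ stack_run T (a # inp) st [])" using 4(5) by simp
      then have "\<forall>y\<in>set (stack_run T (a # inp) st []). s < y" unfolding sorted_wrt_append by simp
      ultimately show False using ca(2) by auto
    qed
    then show ?thesis using IH by simp
  qed
qed

lemma west_no231:
  assumes "west_s y = [1..<n+1]"
  shows "no231 y"
proof -
  have "sorted_wrt (<) [1..<n+1]" by (rule sorted_wrt_upt)
  then show ?thesis using W231[of W0 y "[]" "[]" "[1..<n+1]"] assms unfolding west_s_def sT_def by blast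
qed

lemma Wpush:
  assumes "sorted (rev ds @ st)"
  shows "stack_run W0 (ds @ r) st out = stack_run W0 r (rev ds @ st) out"
  using assms
proof (induction ds arbitrary: st)
  case (Cons d ds)
  have s1: "sorted (d # st)" using Cons.prems by (simp add: sorted_append)
  have "stack_run W0 ((d # ds) @ r) st out = stack_run W0 (ds @ r) (d # st) out"
  proof (cases st)
    case Nil then show ?thesis by simp
  next
    case (Cons s st')
    then show ?thesis using s1 by simp
  qed
  also have "\<dots> = stack_run W0 r (rev ds @ d # st) out"
    using Cons.IH[of "d # st"] Cons.prems by simp
  finally show ?case by simp
qed simp

lemma Wpop:
  assumes "\<forall>s\<in>set st1. s < c" "st2 = [] \<or> c < hd st2" "sorted st2"
  shows "stack_run W0 (c # r) (st1 @ st2) out = stack_run W0 r (c # st2) (out @ st1)"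
  using assms
proof (induction st1 arbitrary: out)
  case Nil
  show ?case
  proof (cases st2)
    case Nil then show ?thesis by simp
  next
    case (Cons t st2')
    have "\<forall>x\<in>set st2'. c \<le> x"
    proof
      fix x assume "x \<in> set st2'"
      then have "t \<le> x" using Nil.prems Cons by simp
      moreover have "c < t" using Nil.prems Cons by simp
      ultimately show "c \<le> x" by simp
    qed
    then have "sorted (c # t # st2')" using Nil.prems Cons by simp
    then show ?thesis using Cons by simp
  qed
next
  case (Cons s st1)
  have "\<not> sorted (c # s # st1 @ st2)" using Cons.prems by auto
  then have nav: "\<not> avoids_all W0 (c # s # (st1 @ st2))" using avW by blast
  have "stack_run W0 (c # r) ((s # st1) @ st2) out = stack_run W0 (c # r) (st1 @ st2) (out @ [s])"
    by (simp only: append_Cons stack_run.simps(4) nav if_False)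
  also have "\<dots> = stack_run W0 r (c # st2) (out @ s # st1)" using Cons.IH[of "out @ [s]"] Cons.prems by simp
  finally show ?case .
qed

lemma upt_split1: "n \<ge> 2 \<Longrightarrow> [Suc 0..<n - Suc 0] @ [n - Suc 0] = [Suc 0..<n]"
proof -
  assume "n \<ge> 2"
  then obtain k where "n = Suc (Suc k)" by (metis add_2_eq_Suc le_Suc_ex)
  then show ?thesis by simp
qed

lemma upt_split2: "n \<ge> 2 \<Longrightarrow> [1..<n+1] = [1..<n-1] @ [n-1, n]"
proof -
  assume "n \<ge> 2"
  then obtain k where "n = Suc (Suc k)" by (metis add_2_eq_Suc le_Suc_ex)
  then show ?thesis by simp
qed

lemma west_O1: "n \<ge> 1 \<Longrightarrow> west_s (rev [1..<n] @ [n]) = [1..<n+1]"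
proof -
  assume n: "n \<ge> 1"
  have "west_s (rev [1..<n] @ [n]) = stack_run W0 [n] [1..<n] []"
    unfolding west_s_def sT_def using Wpush[of "rev [1..<n]" "[]" "[n]" "[]"] by simp
  also have "\<dots> = stack_run W0 [] [n] [1..<n]" using Wpop[of "[1..<n]" n "[]" "[]" "[]"] by simp
  also have "\<dots> = [1..<n+1]" using n by (simp add: run_end)
  finally show ?thesis .
qed

lemma west_O2: "n \<ge> 2 \<Longrightarrow> west_s (rev [1..<n-1] @ [n, n-1]) = [1..<n+1]"
proof -
  assume n: "n \<ge> 2"
  have "west_s (rev [1..<n-1] @ [n, n-1]) = stack_run W0 [n, n-1] [1..<n-1] []"
    unfolding west_s_def sT_def using Wpush[of "rev [1..<n-1]" "[]" "[n, n-1]" "[]"] by simp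
  also have "\<dots> = stack_run W0 [n-1] [n] [1..<n-1]"
  proof -
    have p: "\<forall>s\<in>set [1..<n-1]. s < n" by auto
    show ?thesis using Wpop[OF p, of "[]" "[n-1]" "[]"] by simp
  qed
  also have "\<dots> = stack_run W0 [] [n-1, n] [1..<n-1]" using Wpop[of "[]" "n-1" "[n]" "[]" "[1..<n-1]"] n by simp
  also have "\<dots> = [1..<n+1]" using n by (simp add: run_end upt_split1)
  finally show ?thesis .
qed

lemma west_O3: "n \<ge> 2 \<Longrightarrow> west_s (n # rev [1..<n-1] @ [n-1]) = [1..<n+1]"
proof -
  assume n: "n \<ge> 2"
  have "west_s (n # rev [1..<n-1] @ [n-1]) = stack_run W0 (rev [1..<n-1] @ [n-1]) [n] []"
    unfolding west_s_def sT_def by simp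
  also have "\<dots> = stack_run W0 [n-1] ([1..<n-1] @ [n]) []"
  proof -
    have p: "sorted (rev (rev [1..<n-1]) @ [n])" by (auto simp: sorted_append)
    show ?thesis using Wpush[OF p, of "[n-1]" "[]"] by simp
  qed
  also have "\<dots> = stack_run W0 [] [n-1, n] [1..<n-1]"
  proof -
    have p: "\<forall>s\<in>set [1..<n-1]. s < n-1" by auto
    show ?thesis using Wpop[OF p, of "[n]" "[]" "[]"] n by simp
  qed
  also have "\<dots> = [1..<n+1]" using n by (simp add: run_end upt_split1)
  finally show ?thesis .
qed

definition Dk :: "nat \<Rightarrow> nat list set" where
  "Dk k = {z. isD z \<and> distinct z \<and> set z = {1..k}}"

definition Fam :: "nat \<Rightarrow> nat list set" where
  "Fam n = (\<lambda>z. n # z) ` Dk (n-1) \<union> (\<lambda>z. (n-1) # n # z) ` Dk (n-2)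
           \<union> (\<lambda>z. (n-1) # (n-2) # n # z) ` Dk (n-3)"

lemma sort_range: assumes "distinct z" "set z = {1..k}" shows "sort z = [1..<k+1]"
proof (rule properties_for_sort)
  have "set [1..<k+1] = {1..k}" by (simp only: set_upt atLeastLessThanSuc_atLeastAtMost Suc_eq_plus1[symmetric])
  then have "set [1..<k+1] = set z" using assms(2) by simp
  moreover have "distinct [1..<k+1]" by (rule distinct_upt)
  ultimately show "mset [1..<k+1] = mset z" using assms(1) set_eq_iff_mset_eq_distinct[of "[1..<k+1]" z] by blast
  show "sorted [1..<k+1]" by (rule sorted_upt)
qed

lemma base1: "e < b \<Longrightarrow> a \<noteq> b \<Longrightarrow> a \<noteq> e \<Longrightarrow> avoids_all T0 [a, e, b] \<longleftrightarrow> e < a"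
  by (auto simp: av_suc)

lemma SLb:
  assumes "stack_run T0 inp [e, b] out = F" "e < b" "b \<notin> set inp" "e \<notin> set inp" "distinct inp"
    "e < g" "g \<in> set inp"
  shows "\<exists>w. w \<le> e \<and> subseq [g, w] F"
proof -
  have F: "stack_run T0 inp ([] @ e # [b]) out = F" using assms(1) by simp
  have HB: "\<forall>a\<in>set inp. avoids_all T0 (a # [b])" by simp
  have HB2: "\<forall>a\<in>set inp. \<forall>e'\<in>insert e (set inp). e' \<le> e \<longrightarrow> a \<noteq> e' \<longrightarrow> (avoids_all T0 (a # e' # [b]) \<longleftrightarrow> e' < a)"
  proof (intro ballI impI)
    fix a e' assume a: "a \<in> set inp" and "e' \<in> insert e (set inp)" "e' \<le> e" "a \<noteq> e'"
    then show "avoids_all T0 (a # e' # [b]) \<longleftrightarrow> e' < a" using base1[of e' b a] assms(2,3) a by auto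
  qed
  have d: "distinct (inp @ [] @ e # [b])" using assms(2-5) by auto
  show ?thesis using SL[OF F _ HB HB2 d, where lim = e and g = g] assms(6,7) by auto
qed

lemma sub3I: "x \<in> set xs \<Longrightarrow> subseq [x,y,z] (xs @ [y,z])"
proof -
  assume "x \<in> set xs"
  then obtain p q where xs: "xs = p @ x # q" by (meson in_set_conv_decomp)
  have "subseq [y,z] (q @ [y,z])" by (rule list_emb_append2) simp
  then have "subseq [x,y,z] (x # q @ [y,z])" by simp
  then have "subseq [x,y,z] (p @ x # q @ [y,z])" by (rule list_emb_append2)
  then show ?thesis using xs by simp
qed

lemma sub_snoc:
  assumes "subseq [u,n] (ys @ [b])" "b \<noteq> n"
  shows "subseq [u,n,b] (ys @ [b])"
proof -
  from assms(1) obtain xs1 xs2 where h: "[u,n] = xs1 @ xs2" "subseq xs1 ys" "subseq xs2 [b]"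
    by (auto elim: subseq_appendE)
  have "xs2 = [] \<or> xs2 = [b]" using h(3) by (cases xs2) (auto split: if_splits)
  moreover have "xs2 \<noteq> [b]"
  proof
    assume "xs2 = [b]"
    then have "[u,n] = xs1 @ [b]" using h(1) by simp
    then have "last [u,n] = b" by (metis last_snoc)
    then show False using assms(2) by simp
  qed
  ultimately have "xs2 = []" by blast
  then have "subseq [u,n] ys" using h by simp
  then show ?thesis using list_emb_append_mono[of "(=)" "[u,n]" ys "[b]" "[b]"] by simp
qed

lemma Dk_props: "z \<in> Dk k \<Longrightarrow> isD z \<and> distinct z \<and> set z = {1..k}"
  unfolding Dk_def by simp

lemma suff1:
  assumes n: "n \<ge> 4" and z: "z \<in> Dk (n-1)"
  shows "sT {[1,2,3],[3,2,1]} (n # z) = rev [1..<n] @ [n]"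
proof -
  have zz: "isD z" "distinct z" "set z = {1..n-1}" using Dk_props[OF z] by auto
  have V: "set z \<subseteq> {x. x < n}" using zz(3) n by auto
  have "sT T0 (n # z) = stack_run T0 z [n] []" unfolding sT_def by simp
  also have "\<dots> = rev (sort z) @ [n]" using M2suff[OF zz(1) M2base_single V, of "[]"] by simp
  also have "sort z = [1..<n]" using sort_range[OF zz(2,3)] n by simp
  finally show ?thesis by simp
qed

lemma suff2:
  assumes n: "n \<ge> 4" and z: "z \<in> Dk (n-2)"
  shows "sT {[1,2,3],[3,2,1]} ((n-1) # n # z) = rev [1..<n-1] @ [n, n-1]"
proof -
  have zz: "isD z" "distinct z" "set z = {1..n-2}" using Dk_props[OF z] by auto
  have V: "set z \<subseteq> {x. x < n-1}" using zz(3) n by auto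
  have "sT T0 ((n-1) # n # z) = stack_run T0 z [n, n-1] []" unfolding sT_def by simp
  also have "\<dots> = rev (sort z) @ [n, n-1]"
  proof -
    have MB: "M2base [n, n-1] {x. x < n-1}" using M2base_double[of "n-1" n] n by simp
    show ?thesis using M2suff[OF zz(1) MB V, of "[]"] by simp
  qed
  also have "sort z = [1..<n-1]"
  proof -
    have e: "n - 2 + 1 = n - 1" using n by arith
    have "sort z = [1..<n-2+1]" by (rule sort_range[OF zz(2,3)])
    with e show ?thesis by metis
  qed
  finally show ?thesis by simp
qed

lemma suff3:
  assumes n: "n \<ge> 4" and z: "z \<in> Dk (n-3)"
  shows "sT {[1,2,3],[3,2,1]} ((n-1) # (n-2) # n # z) = n # rev [1..<n-1] @ [n-1]"
proof -
  have zz: "isD z" "distinct z" "set z = {1..n-3}" using Dk_props[OF z] by auto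
  have V: "set z \<subseteq> {x. x < n-1}" using zz(3) n by auto
  obtain a z' where az: "z = a # z'" using zz(3) n by (cases z) auto
  have "a \<in> {1..n-3}" using zz(3) az by (metis list.set_intros(1))
  then have "a \<le> n - 3" by simp
  then have a: "a < n - 2" using n by arith
  have av1: "avoids_all T0 [n, n-2, n-1]" using n by (simp add: av_suc)
  have av2: "\<not> avoids_all T0 [a, n, n-2, n-1]" using n a by (simp add: av_suc) arith
  have av3: "\<not> avoids_all T0 [a, n-2, n-1]" using n a by (simp add: av_suc)
  have "sT T0 ((n-1) # (n-2) # n # z) = stack_run T0 (n # z) [n-2, n-1] []" unfolding sT_def by simp
  also have "\<dots> = stack_run T0 z [n, n-2, n-1] []" using av1 by simp
  also have "\<dots> = stack_run T0 z [n-1] [n, n-2]" using av2 av3 az by simp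
  also have "\<dots> = [n, n-2] @ rev (sort z) @ [n-1]"
    using M2suff[OF zz(1) M2base_single V, of "[n, n-2]"] by simp
  also have "sort z = [1..<n-2]"
  proof -
    have e: "n - 3 + 1 = n - 2" using n by arith
    have "sort z = [1..<n-3+1]" by (rule sort_range[OF zz(2,3)])
    with e show ?thesis by metis
  qed
  also have "rev [1..<n-1] = (n-2) # rev [1..<n-2]"
  proof -
    have "n - 1 = Suc (n-2)" using n by simp
    then have "[1..<n-1] = [1..<n-2] @ [n-2]" using n by simp
    then show ?thesis by simp
  qed
  ultimately show ?thesis by simp
qed

lemma suff:
  assumes n: "n \<ge> 4" and x: "x \<in> Fam n"
  shows "x \<in> Sort n [1,2,3] [3,2,1]"
proof -
  from x consider (a) z where "z \<in> Dk (n-1)" "x = n # z"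
    | (b) z where "z \<in> Dk (n-2)" "x = (n-1) # n # z"
    | (c) z where "z \<in> Dk (n-3)" "x = (n-1) # (n-2) # n # z"
    unfolding Fam_def by blast
  then show ?thesis
  proof cases
    case a
    have zz: "distinct z" "set z = {1..n-1}" using Dk_props[OF a(1)] by auto
    have "x \<in> perms n" unfolding perms_def using a(2) zz n by auto
    moreover have "west_s (sT {[1,2,3],[3,2,1]} x) = [1..<n+1]"
      using suff1[OF n a(1)] a(2) west_O1 n by simp
    ultimately show ?thesis unfolding Sort_def by simp
  next
    case b
    have zz: "distinct z" "set z = {1..n-2}" using Dk_props[OF b(1)] by auto
    have "x \<in> perms n" unfolding perms_def using b(2) zz n by auto
    moreover have "west_s (sT {[1,2,3],[3,2,1]} x) = [1..<n+1]"
      using suff2[OF n b(1)] b(2) west_O2 n by simp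
    ultimately show ?thesis unfolding Sort_def by simp
  next
    case c
    have zz: "distinct z" "set z = {1..n-3}" using Dk_props[OF c(1)] by auto
    have "x \<in> perms n" unfolding perms_def using c(2) zz n by auto
    moreover have "west_s (sT {[1,2,3],[3,2,1]} x) = [1..<n+1]"
      using suff3[OF n c(1)] c(2) west_O3 n by simp
    ultimately show ?thesis unfolding Sort_def by simp
  qed
qed

lemma no231_contra:
  assumes "no231 F" "subseq [a,b,c] F" "c < a" "a < b" shows False
  using no231_D[OF assms] .

lemma sub_cons2: "subseq [g,w] R \<Longrightarrow> subseq [l,g,w] (l # R)"
  by simp

lemma int2: "(n::nat) \<ge> 2 \<Longrightarrow> {1..n} - {n-1} - {n} = {1..n-2}"
  by auto
lemma int3: "(n::nat) \<ge> 3 \<Longrightarrow> {1..n} - {n-1} - {n-2} - {n} = {1..n-3}"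
  by auto
lemma rm2: "distinct (b # n # xs) \<Longrightarrow> set xs = set (b # n # xs) - {b} - {n}"
  by auto
lemma rm4: "distinct (b # l # n # xs) \<Longrightarrow> set xs = set (b # l # n # xs) - {b} - {l} - {n}"
  by auto

lemma nec:
  assumes n4: "n \<ge> 4" and dx: "distinct x" and sx: "set x = {1..n}"
    and nf: "no231 (stack_run T0 x [] [])"
  shows "x \<in> Fam n"
proof -
  obtain b x' where x: "x = b # x'" using sx n4 by (cases x) auto
  define F where "F = stack_run T0 x' [b] []"
  have nfF: "no231 F" using nf x F_def by simp
  have bx: "b \<notin> set x'" "distinct x'" using dx x by auto
  have bn: "b \<le> n" using sx x by auto
  show ?thesis
  proof (cases "b = n")
    case True
    have "set x' = set x - {b}" using x bx by auto
    also have "\<dots> = {1..n} - {n}" using sx True by simp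
    also have "\<dots> = {1..n-1}" using n4 by auto
    finally have sx': "set x' = {1..n-1}" .
    have V: "set x' \<subseteq> {x. x < n}" using sx' n4 by auto
    have "isD x'" using M2nec[OF M2base_single V bx(2)] nfF F_def True by simp
    then have "x' \<in> Dk (n-1)" unfolding Dk_def using bx sx' by simp
    then show ?thesis unfolding Fam_def using x True by blast
  next
    case False
    then have bn': "b < n" using bn by simp
    have "n \<in> set x" using sx n4 by simp
    then have nx': "n \<in> set x'" using x False by simp
    obtain ys where Fys: "F = ys @ [b]" using run_last[of "[b]" x' "[]"] F_def by auto
    have xle: "\<forall>y\<in>set x' \<union> set [b]. y \<le> n" using sx x by auto
    have dist: "distinct (x' @ [b])" using bx by simp
    have key: "u < b" if u: "u \<in> set (takeWhile (\<lambda>y. y \<noteq> n) x')" for u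
    proof (rule ccontr)
      assume nub: "\<not> u < b"
      have ux: "u \<in> set x'" "u \<noteq> n" using set_takeWhileD[OF u] by auto
      have "u \<noteq> b" using ux bx by auto
      then have ub: "b < u" using nub by simp
      have "subseq [u, n] F"
        using L3a[OF F_def[symmetric] refl _ nx' xle dist bn', of "[]" u] u ub by simp
      then have "subseq [u, n, b] F" using sub_snoc Fys False by simp
      moreover have "u < n" using ux xle by (auto simp: le_neq_implies_less)
      ultimately show False using no231_contra[OF nfF] ub by blast
    qed
    obtain l1 x'' where x': "x' = l1 # x''" using nx' by (cases x') auto
    show ?thesis
    proof (cases "l1 = n")
      case True
      have F1: "F = stack_run T0 x'' [n, b] []" using F_def x' True by simp
      have avnb: "\<forall>a\<in>set x''. avoids_all T0 (a # [n, b])"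
      proof
        fix a assume a: "a \<in> set x''"
        have ax: "a \<in> set x" using a x x' by simp
        then have "a \<le> n" using sx by simp
        moreover have "a \<noteq> n" "a \<noteq> b" using dx x x' True a by auto
        ultimately have "a < n" "a \<noteq> b" by auto
        then show "avoids_all T0 (a # [n, b])" using bn' by (simp add: av_suc)
      qed
      obtain zs where Fzs: "F = zs @ [n, b]"
        using run_bot[of T0 "[n, b]" x'' "[n, b]" "[]" "[]"] avnb F1 by auto
      have b1: "b = n - 1"
      proof (rule ccontr)
        assume nb: "b \<noteq> n - 1"
        have "n - 1 \<in> set x" using sx n4 by simp
        then have "n - 1 \<in> set x''" using x x' True nb n4 by auto
        then have "n - 1 \<in> set F" using F1 by (simp add: run_set)
        then have "n - 1 \<in> set zs" using Fzs nb n4 by auto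
        then have sub: "subseq [n-1, n, b] F" using Fzs sub3I by simp
        have lt1: "b < n - 1" using nb bn' by arith
        have lt2: "n - 1 < n" using n4 by arith
        show False by (rule no231_contra[OF nfF sub lt1 lt2])
      qed
      have "set x'' = set x - {b} - {n}" using rm2[of b n x''] dx x x' True by simp
      then have sx'': "set x'' = {1..n-2}" using sx b1 int2[of n] n4 by simp
      have V: "set x'' \<subseteq> {x. x < n-1}" using sx'' n4 by auto
      have MB: "M2base [n, n-1] {x. x < n-1}" using M2base_double[of "n-1" n] n4 by simp
      have "isD x''" using M2nec[OF MB V] nfF F1 b1 dx x x' by simp
      then have "x'' \<in> Dk (n-2)" unfolding Dk_def using dx x x' sx'' by simp
      then show ?thesis unfolding Fam_def using x x' True b1 by blast
    next
      case False
      note l1n = False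
      have l1b: "l1 < b" using key[of l1] x' False by simp
      have nx'': "n \<in> set x''" using nx' x' False by simp
      obtain l2 x''' where x'': "x'' = l2 # x'''" using nx'' by (cases x'') auto
      show ?thesis
      proof (cases "l2 = n")
        case True
        note l2n = True
        have av: "avoids_all T0 [n, l1, b]" using l1b bn' by (simp add: av_suc)
        have F1: "F = stack_run T0 x''' [n, l1, b] []" using F_def x' x'' True av by simp
        have "length x = n" using distinct_card[OF dx] sx by simp
        then obtain r Q where x''': "x''' = r # Q" using x x' x'' n4 by (cases x''') auto
        have dd: "distinct (b # l1 # n # r # Q)" using dx x x' x'' x''' True by simp
        have "r \<in> set x" using x x' x'' x''' by simp
        then have "r \<le> n" using sx by simp
        moreover have "r \<noteq> n" using dd by auto
        ultimately have rn: "r < n" by simp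
        show ?thesis
        proof (cases "r < l1")
          case False
          then have l1r: "l1 < r" using dd by auto
          have "avoids_all T0 [r, n, l1, b]" using l1r rn l1b bn' dd by (simp add: av_suc) 
          then have "F = stack_run T0 Q [r, n, l1, b] []" using F1 x''' by simp
          then have sub: "subseq [r, n, l1, b] F" using run_stack_subseq by metis
          show ?thesis
          proof (cases "b < r")
            case True
            have "subseq [r, n, b] [r, n, l1, b]" by simp
            then have "subseq [r, n, b] F" using sub by (rule subseq_order.trans)
            then show ?thesis using no231_contra[OF nfF] True rn by blast
          next
            case False
            then have "r < b" using dd by auto
            have "subseq [r, n, l1] [r, n, l1, b]" by simp
            then have "subseq [r, n, l1] F" using sub by (rule subseq_order.trans)
            then show ?thesis using no231_contra[OF nfF] l1r rn by blast
          qed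
        next
          case True
          note rl1 = True
          have nav1: "\<not> avoids_all T0 [r, n, l1, b]" using rl1 l1b by (simp add: av_suc)
          have nav2: "\<not> avoids_all T0 [r, l1, b]" using rl1 l1b by (simp add: av_suc)
          define R where "R = stack_run T0 Q [r, b] []"
          have FR: "F = n # l1 # R"
            using F1 x''' nav1 nav2 R_def run_out[of T0 Q "[r,b]" "[n, l1]"] by simp
          have noQ: "g < l1" if g: "g \<in> set Q" for g
          proof (rule ccontr)
            assume "\<not> g < l1"
            moreover have "g \<noteq> l1" using g dd by auto
            ultimately have gl: "l1 < g" by simp
            have "b \<notin> set Q" "r \<notin> set Q" "distinct Q" using dd by auto
            then obtain w where w: "w \<le> r" "subseq [g, w] R"
              using SLb[OF R_def[symmetric] _ _ _ _ _ g] rl1 l1b gl by fastforce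
            have "subseq [l1, g, w] (l1 # R)" by (rule sub_cons2[OF w(2)])
            then have "subseq [l1, g, w] (n # l1 # R)" by (rule list_emb_Cons)
            then have sub: "subseq [l1, g, w] F" using FR by simp
            have "w < l1" using w(1) rl1 by simp
            then show False by (rule no231_contra[OF nfF sub _ gl])
          qed
          have setx: "set x = {b, l1, n, r} \<union> set Q" using x x' x'' x''' l2n by auto
          have b1: "b = n - 1"
          proof -
            have "n - 1 \<in> set x" using sx n4 by simp
            moreover have "n - 1 \<notin> set Q" using noQ l1b bn' by fastforce
            ultimately show ?thesis using setx rl1 l1b bn' by auto
          qed
          have l12: "l1 = n - 2"
          proof -
            have "n - 2 \<in> set x" using sx n4 by simp
            moreover have "n - 2 \<notin> set Q" using noQ l1b b1 by fastforce
            ultimately show ?thesis using setx rl1 l1b b1 n4 by auto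
          qed
          have "R = stack_run T0 (r # Q) [n-1] []" using R_def b1 by simp
          then have nfR: "no231 (stack_run T0 (r # Q) [n-1] [])" using nfF FR no231_Cons by metis
          have srQ: "set (r # Q) = {1..n-3}"
          proof -
            have "set (r # Q) = set x - {b} - {l1} - {n}" using rm4[of b l1 n "r # Q"] dd x x' x'' x''' l2n by simp
            then show ?thesis using sx b1 l12 int3[of n] n4 by simp
          qed
          have V: "set (r # Q) \<subseteq> {x. x < n-1}" using srQ n4 by auto
          have "isD (r # Q)" using M2nec[OF M2base_single V _ nfR] dd by simp
          then have "r # Q \<in> Dk (n-3)" unfolding Dk_def using dd srQ by simp
          then show ?thesis unfolding Fam_def using x x' x'' x''' l2n b1 l12 by blast
        qed
      next
        case False
        have l2b: "l2 < b" using key[of l2] x' x'' False l1n by simp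
        have dd: "distinct (b # l1 # l2 # x''')" using dx x x' x'' by simp
        have nrest: "n \<in> set x'''" using nx'' x'' False by simp
        show ?thesis
        proof (cases "l2 < l1")
          case True
          have nav: "\<not> avoids_all T0 [l2, l1, b]" using True l1b by (simp add: av_suc)
          define R where "R = stack_run T0 x''' [l2, b] []"
          have FR: "F = l1 # R" using F_def x' x'' nav R_def run_out[of T0 x''' "[l2,b]" "[l1]"] by simp
          obtain w where w: "w \<le> l2" "subseq [n, w] R"
            using SLb[OF R_def[symmetric] l2b _ _ _ _ nrest] dd True l1b bn' by fastforce
          have "subseq [l1, n, w] (l1 # R)" by (rule sub_cons2[OF w(2)])
          then have sub: "subseq [l1, n, w] F" using FR by simp
          have c1: "w < l1" using w(1) True by simp
          have c2: "l1 < n" using l1b bn' by simp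
          show ?thesis using no231_contra[OF nfF sub c1 c2] by blast
        next
          case False
          then have l12: "l1 < l2" using dd by auto
          have av: "avoids_all T0 [l2, l1, b]" using l12 l2b by (simp add: av_suc)
          obtain c rest' where rest: "x''' = c # rest'" using nrest by (cases x''') auto
          have cd: "c \<noteq> l1" "c \<noteq> l2" "c \<noteq> b" using dd rest by auto
          have nav: "\<not> avoids_all T0 [c, l2, l1, b]" using cd l12 l2b by (simp add: av_suc) arith
          define R where "R = stack_run T0 x''' [l1, b] []"
          have FR: "F = l2 # R" using F_def x' x'' av nav rest R_def run_out[of T0 x''' "[l1,b]" "[l2]"] by simp
          obtain w where w: "w \<le> l1" "subseq [n, w] R"
            using SLb[OF R_def[symmetric] l1b _ _ _ _ nrest] dd l12 l1b bn' by fastforce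
          have "subseq [l2, n, w] (l2 # R)" by (rule sub_cons2[OF w(2)])
          then have sub: "subseq [l2, n, w] F" using FR by simp
          have c1: "w < l2" using w(1) l12 by simp
          have c2: "l2 < n" using l2b bn' by simp
          show ?thesis using no231_contra[OF nfF sub c1 c2] by blast
        qed
      qed
    qed
  qed
qed

lemma finite_Dk: "finite (Dk k)"
proof (rule finite_subset)
  show "Dk k \<subseteq> {xs. set xs \<subseteq> {1..k} \<and> length xs = k}"
    unfolding Dk_def using distinct_card by fastforce
  show "finite {xs. set xs \<subseteq> {1..k} \<and> length xs = k}"
    by (rule finite_lists_length_eq) simp
qed

lemma Dk1: "Dk 1 = {[1]}"
proof
  show "Dk 1 \<subseteq> {[1]}"
  proof
    fix z assume z: "z \<in> Dk 1"
    then have "distinct z" "set z = {1}" unfolding Dk_def by auto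
    then have "length z = 1" using distinct_card by fastforce
    then obtain a where "z = [a]" by (cases z) auto
    then show "z \<in> {[1]}" using `set z = {1}` by simp
  qed
  show "{[1]} \<subseteq> Dk 1" unfolding Dk_def by (auto intro: isD.intros)
qed

lemma ivSuc: "{1..Suc k} = insert (Suc k) {1..k}"
  by (simp add: atLeastAtMostSuc_conv)

lemma ivSuc_rm: "{1..Suc k} - {Suc k} = {1..k}"
  by auto

lemma Dk_Suc:
  assumes k: "k \<ge> 1"
  shows "Dk (Suc k) = (\<lambda>z. Suc k # z) ` Dk k \<union> (\<lambda>z. hd z # Suc k # tl z) ` Dk k"
proof
  show "Dk (Suc k) \<subseteq> (\<lambda>z. Suc k # z) ` Dk k \<union> (\<lambda>z. hd z # Suc k # tl z) ` Dk k"
  proof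
    fix z assume z: "z \<in> Dk (Suc k)"
    then have iz: "isD z" and dz: "distinct z" and sz: "set z = {1..Suc k}" unfolding Dk_def by auto
    have sk: "Suc k \<in> set z" using sz by simp
    from iz show "z \<in> (\<lambda>z. Suc k # z) ` Dk k \<union> (\<lambda>z. hd z # Suc k # tl z) ` Dk k"
    proof cases
      case D0
      then show ?thesis using sk by simp
    next
      case (D1 z' m)
      have "m \<in> set z" using D1 by simp
      then have "m \<le> Suc k" using sz by simp
      moreover have "m \<ge> Suc k"
      proof -
        have "Suc k = m \<or> Suc k \<in> set z'" using sk D1(1) by simp
        then show ?thesis using D1(3) by fastforce
      qed
      ultimately have m: "m = Suc k" by simp
      have "set z' = set z - {m}" using dz D1 by auto
      then have "set z' = {1..k}" using sz m ivSuc_rm by simp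
      then have "z' \<in> Dk k" unfolding Dk_def using D1 dz by simp
      then show ?thesis using D1 m by blast
    next
      case (D2 a z' m)
      have "m \<in> set z" using D2 by simp
      then have "m \<le> Suc k" using sz by simp
      moreover have "m \<ge> Suc k"
      proof -
        have "Suc k = m \<or> Suc k \<in> set (a # z')" using sk D2(1) by auto
        then show ?thesis using D2(3) by fastforce
      qed
      ultimately have m: "m = Suc k" by simp
      have "set (a # z') = set z - {m}" using dz D2 by auto
      then have "set (a # z') = {1..k}" using sz m ivSuc_rm by simp
      then have "a # z' \<in> Dk k" unfolding Dk_def using D2 dz by simp
      moreover have "z = hd (a # z') # Suc k # tl (a # z')" using D2 m by simp
      ultimately show ?thesis by blast
    qed
  qed
  show "(\<lambda>z. Suc k # z) ` Dk k \<union> (\<lambda>z. hd z # Suc k # tl z) ` Dk k \<subseteq> Dk (Suc k)"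
  proof
    fix y assume "y \<in> (\<lambda>z. Suc k # z) ` Dk k \<union> (\<lambda>z. hd z # Suc k # tl z) ` Dk k"
    then consider (a) z where "z \<in> Dk k" "y = Suc k # z" | (b) z where "z \<in> Dk k" "y = hd z # Suc k # tl z"
      by blast
    then show "y \<in> Dk (Suc k)"
    proof cases
      case a
      then have "isD z" "distinct z" "set z = {1..k}" unfolding Dk_def by auto
      moreover have "Suc k \<notin> set z" using `set z = {1..k}` by simp
      ultimately show ?thesis unfolding Dk_def using a ivSuc by (simp add: isD.D1)
    next
      case b
      then have zz: "isD z" "distinct z" "set z = {1..k}" unfolding Dk_def by auto
      then obtain c z' where cz: "z = c # z'" using k by (cases z) auto
      have lt: "\<forall>x\<in>set (c # z'). x < Suc k" using zz(3) cz by auto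
      have "isD (c # Suc k # z')" using zz(1) cz lt by (simp add: isD.D2)
      moreover have "distinct (c # Suc k # z')" using zz(2) cz lt by auto
      moreover have "set (c # Suc k # z') = {1..Suc k}"
      proof -
        have "set (c # Suc k # z') = insert (Suc k) (set (c # z'))" by auto
        then show ?thesis using zz(3) cz ivSuc by simp
      qed
      ultimately show ?thesis unfolding Dk_def using b cz by simp
    qed
  qed
qed

lemma card_Dk: "k \<ge> 1 \<Longrightarrow> card (Dk k) = 2 ^ (k - 1)"
proof (induction k rule: nat_induct_at_least)
  case base
  then show ?case using Dk1 by simp
next
  case (Suc k)
  have inj1: "inj_on (\<lambda>z. Suc k # z) (Dk k)" by (rule inj_onI) simp
  have inj2: "inj_on (\<lambda>z. hd z # Suc k # tl z) (Dk k)"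
  proof (rule inj_onI)
    fix z1 z2 assume z: "z1 \<in> Dk k" "z2 \<in> Dk k" and e: "hd z1 # Suc k # tl z1 = hd z2 # Suc k # tl z2"
    have "z1 \<noteq> []" "z2 \<noteq> []" using z Suc.hyps unfolding Dk_def by auto
    then show "z1 = z2" using e by (metis list.collapse list.inject)
  qed
  have disj: "(\<lambda>z. Suc k # z) ` Dk k \<inter> (\<lambda>z. hd z # Suc k # tl z) ` Dk k = {}"
  proof (rule ccontr)
    assume "\<not> ?thesis"
    then obtain z1 z2 where z: "z1 \<in> Dk k" "z2 \<in> Dk k" and e: "Suc k # z1 = hd z2 # Suc k # tl z2" by blast
    have "z2 \<noteq> []" using z Suc.hyps unfolding Dk_def by auto
    then have "hd z2 \<in> {1..k}" using z unfolding Dk_def by auto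
    then show False using e by simp
  qed
  have "card (Dk (Suc k)) = card ((\<lambda>z. Suc k # z) ` Dk k) + card ((\<lambda>z. hd z # Suc k # tl z) ` Dk k)"
    using Dk_Suc[OF Suc.hyps] disj finite_Dk by (simp add: card_Un_disjoint)
  also have "\<dots> = 2 * card (Dk k)" using card_image[OF inj1] card_image[OF inj2] by simp
  also have "\<dots> = 2 ^ (Suc k - 1)" using Suc.IH Suc.hyps by (cases k) auto
  finally show ?case .
qed

lemma Sort_eq: "n \<ge> 4 \<Longrightarrow> Sort n [1,2,3] [3,2,1] = Fam n"
proof
  assume n: "n \<ge> 4"
  show "Fam n \<subseteq> Sort n [1,2,3] [3,2,1]" using suff[OF n] by blast
  show "Sort n [1,2,3] [3,2,1] \<subseteq> Fam n"
  proof
    fix x assume "x \<in> Sort n [1,2,3] [3,2,1]"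
    then have p: "x \<in> perms n" and w: "west_s (sT {[1,2,3],[3,2,1]} x) = [1..<n+1]"
      unfolding Sort_def by auto
    have "no231 (sT {[1,2,3],[3,2,1]} x)" by (rule west_no231[OF w])
    then have "no231 (stack_run T0 x [] [])" unfolding sT_def .
    then show "x \<in> Fam n" using nec[OF n] p unfolding perms_def by blast
  qed
qed

lemma card_Fam: "n \<ge> 4 \<Longrightarrow> card (Fam n) = 7 * 2 ^ (n - 4)"
proof -
  assume n: "n \<ge> 4"
  define A where "A = (\<lambda>z. n # z) ` Dk (n-1)"
  define B where "B = (\<lambda>z. (n-1) # n # z) ` Dk (n-2)"
  define C where "C = (\<lambda>z. (n-1) # (n-2) # n # z) ` Dk (n-3)"
  have F: "Fam n = A \<union> B \<union> C" unfolding Fam_def A_def B_def C_def by simp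
  have cA: "card A = 2 ^ (n-2)" unfolding A_def
    using card_image[of "\<lambda>z. n # z" "Dk (n-1)"] card_Dk[of "n-1"] n by (simp add: inj_on_def)
  have cB: "card B = 2 ^ (n-3)" unfolding B_def
    using card_image[of "\<lambda>z. (n-1) # n # z" "Dk (n-2)"] card_Dk[of "n-2"] n by (simp add: inj_on_def)
  have cC: "card C = 2 ^ (n-4)" unfolding C_def
    using card_image[of "\<lambda>z. (n-1) # (n-2) # n # z" "Dk (n-3)"] card_Dk[of "n-3"] n by (simp add: inj_on_def)
  have fA: "finite A" "finite B" "finite C" unfolding A_def B_def C_def using finite_Dk by auto
  have dAB: "A \<inter> B = {}" unfolding A_def B_def using n by auto
  have dAC: "A \<inter> C = {}" unfolding A_def C_def using n by auto
  have dBC: "B \<inter> C = {}" unfolding B_def C_def using n by auto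
  have "card (A \<union> B \<union> C) = card A + card B + card C"
    using fA dAB dAC dBC by (simp add: card_Un_disjoint Int_Un_distrib2)
  also have "\<dots> = 7 * 2 ^ (n - 4)"
  proof -
    obtain m where m: "n = m + 4" using n by (metis add.commute le_Suc_ex)
    show ?thesis unfolding cA cB cC m by simp
  qed
  finally show ?thesis using F by simp
qed

theorem theorem1p2:
  fixes n :: nat
  assumes "n \<ge> 4"
  shows "card (Sort n [1,2,3] [3,2,1]) = 7 * 2 ^ (n - 4)"
  using Sort_eq[OF assms] card_Fam[OF assms] by simp

end
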